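(* Let $\mu>0$, let $X$ have the skew-symmetric-Laplace-uniform density with parameter $\mu$ (defined in the context), with cdf $G$, and let $M$ be a median, i.e. $G(M)=\tfrac12$. Put $G(0)=\tfrac12+\frac{e^{-\mu}-1}{2\mu}$ and $G(\mu)=1-e^{-\mu}$. Then: (i) if $G(0)>\tfrac12$, $M$ is a solution of $e^{M}(M-1+\mu)+e^{-\mu}-\mu=0$; (ii) if $G(0)\le\tfrac12<G(\mu)$, $M$ is a solution of $e^{-M}(-M-1-\mu)+e^{-\mu}+\mu=0$; (iii) if $G(\mu)\le\tfrac12$, then $M=\ln 2$.
   Context: For $\mu\in\mathbb{R}\setminus\{0\}$, the skew-symmetric-Laplace-uniform distribution $SSLUD(\mu)$ is the distribution on $\mathbb{R}$ with density $$g(x)=\begin{cases} 0 & \text{if } x/\mu<-1,\\ e^{-|x|}\left(\dfrac{x}{2\mu}+\dfrac12\right) & \text{if } -1\le x/\mu<1,\\ e^{-|x|} & \text{if } x/\mu\ge 1.\end{cases}$$ *)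

theory Defs
  imports "HOL-Analysis.Analysis"
begin

definition SSLUD_density :: "real \<Rightarrow> real \<Rightarrow> real" where
  "SSLUD_density mu x =
     (if x / mu < -1 then 0
      else if x / mu < 1 then exp (- \<bar>x\<bar>) * (x / (2 * mu) + 1 / 2)
      else exp (- \<bar>x\<bar>))"

definition SSLUD_cdf :: "real \<Rightarrow> real \<Rightarrow> real" where
  "SSLUD_cdf mu x = (LINT t:{..x}|lborel. SSLUD_density mu t)"

end

theory Submission
  imports Defs
begin

lemma dens_alt:
  assumes "mu > 0"
  shows "SSLUD_density mu t = exp (- \<bar>t\<bar>) * min 1 (max 0 (t / (2*mu) + 1/2))"
proof -
  have e1: "t / mu < -1 \<longleftrightarrow> t < -mu" using assms by (simp add: divide_less_eq)
  have e2: "t / mu < 1 \<longleftrightarrow> t < mu" using assms by (simp add: divide_less_eq)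
  have e3: "t / (2*mu) + 1/2 = (t + mu) / (2*mu)" using assms by (simp add: field_simps)
  have e4: "(t + mu) / (2*mu) < 0 \<longleftrightarrow> t < -mu" using assms by (auto simp: divide_less_0_iff)
  have e5: "(t + mu) / (2*mu) \<ge> 1 \<longleftrightarrow> t \<ge> mu" using assms by (simp add: le_divide_eq)
  show ?thesis unfolding SSLUD_density_def e1 e2 e3 using e4 e5
    by (auto simp: min_def max_def)
qed

lemma dens_cont:
  assumes "mu > 0"
  shows "continuous_on S (SSLUD_density mu)"
  unfolding dens_alt[OF assms, abs_def] by (intro continuous_intros) (use assms in auto)

lemma ftc_piece:
  fixes F g :: "real \<Rightarrow> real"
  assumes "a \<le> b" and "\<And>x. x \<in> {a<..<b} \<Longrightarrow> d x = g x"
    and "\<And>x. (F has_real_derivative g x) (at x)"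
  shows "(d has_integral (F b - F a)) {a..b}"
proof (rule fundamental_theorem_of_calculus_interior[OF assms(1)])
  show "continuous_on {a..b} F"
    using assms(3) by (meson DERIV_continuous continuous_at_imp_continuous_on)
  fix x assume "x \<in> {a<..<b}"
  then show "(F has_vector_derivative d x) (at x)"
    using assms(2,3) by (simp add: has_real_derivative_iff_has_vector_derivative[symmetric])
qed

lemma cdf_integral:
  assumes "mu > 0"
  shows "SSLUD_cdf mu x = integral {-mu..x} (SSLUD_density mu)"
proof -
  have "SSLUD_cdf mu x = (LINT t:{-mu..x}|lborel. SSLUD_density mu t)"
    unfolding SSLUD_cdf_def set_lebesgue_integral_def
  proof (rule Bochner_Integration.integral_cong[OF refl])
    fix t
    show "indicator {..x} t *\<^sub>R SSLUD_density mu t = indicator {-mu..x} t *\<^sub>R SSLUD_density mu t"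
    proof (cases "t < -mu")
      case True
      then have "t / mu < -1" using assms by (simp add: divide_less_eq)
      then show ?thesis by (simp add: SSLUD_density_def)
    qed (auto simp: indicator_def)
  qed
  also have "\<dots> = integral {-mu..x} (SSLUD_density mu)"
    by (rule set_borel_integral_eq_integral(2)[OF borel_integrable_atLeastAtMost'[OF dens_cont[OF assms]]])
  finally show ?thesis .
qed

definition "FA mu x = exp x * ((x - 1) / (2*mu) + 1/2)"
definition "FB mu x = - exp (- x) * ((x + 1) / (2*mu) + 1/2)"

lemma int1:
  assumes "mu > 0" "-mu \<le> x" "x \<le> 0"
  shows "(SSLUD_density mu has_integral (FA mu x - FA mu (-mu))) {-mu..x}"
proof (rule ftc_piece[where g = "\<lambda>t. exp t * (t / (2*mu) + 1/2)"])
  fix t assume "t \<in> {-mu<..<x}"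
  then show "SSLUD_density mu t = exp t * (t / (2*mu) + 1/2)"
    using assms by (simp add: SSLUD_density_def divide_less_eq)
next
  fix t
  show "(FA mu has_real_derivative exp t * (t / (2*mu) + 1/2)) (at t)"
    unfolding FA_def[abs_def]
    using assms by (auto intro!: derivative_eq_intros simp: field_simps)
qed (use assms in auto)

lemma int2:
  assumes "mu > 0" "0 \<le> x" "x \<le> mu"
  shows "(SSLUD_density mu has_integral (FB mu x - FB mu 0)) {0..x}"
proof (rule ftc_piece[where g = "\<lambda>t. exp (-t) * (t / (2*mu) + 1/2)"])
  fix t assume "t \<in> {0<..<x}"
  then show "SSLUD_density mu t = exp (-t) * (t / (2*mu) + 1/2)"
    using assms by (simp add: SSLUD_density_def divide_less_eq)
next
  fix t
  show "(FB mu has_real_derivative exp (-t) * (t / (2*mu) + 1/2)) (at t)"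
    unfolding FB_def[abs_def]
    using assms by (auto intro!: derivative_eq_intros simp: field_simps)
qed (use assms in auto)

lemma int3:
  assumes "mu > 0" "mu \<le> x"
  shows "(SSLUD_density mu has_integral (exp (-mu) - exp (-x))) {mu..x}"
proof -
  have "(SSLUD_density mu has_integral ((\<lambda>t. - exp (-t)) x - (\<lambda>t. - exp (-t)) mu)) {mu..x}"
  proof (rule ftc_piece[where g = "\<lambda>t. exp (-t)"])
    fix t assume "t \<in> {mu<..<x}"
    then show "SSLUD_density mu t = exp (-t)"
      using assms by (simp add: SSLUD_density_def divide_less_eq le_divide_eq)
  next
    fix t
    show "((\<lambda>t. - exp (-t)) has_real_derivative exp (-t)) (at t)"
      by (rule derivative_eq_intros refl | simp)+
  qed (use assms in auto)
  then show ?thesis by simp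
qed

lemma cdf_low:
  assumes "mu > 0" "x < -mu"
  shows "SSLUD_cdf mu x = 0"
  using assms by (simp add: cdf_integral)

lemma cdf_A:
  assumes "mu > 0" "-mu \<le> x" "x \<le> 0"
  shows "SSLUD_cdf mu x = FA mu x - FA mu (-mu)"
  using int1[OF assms] assms by (simp add: cdf_integral integral_unique)

lemma cdf_B:
  assumes "mu > 0" "0 \<le> x" "x \<le> mu"
  shows "SSLUD_cdf mu x = FA mu 0 - FA mu (-mu) + (FB mu x - FB mu 0)"
proof -
  have "(SSLUD_density mu has_integral (FA mu 0 - FA mu (-mu) + (FB mu x - FB mu 0))) {-mu..x}"
    by (rule has_integral_combine[OF _ _ int1[OF assms(1)] int2[OF assms]]) (use assms in auto)
  then show ?thesis using assms by (simp add: cdf_integral integral_unique)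
qed

lemma cdf_C:
  assumes "mu > 0" "mu \<le> x"
  shows "SSLUD_cdf mu x = FA mu 0 - FA mu (-mu) + (FB mu mu - FB mu 0) + (exp (-mu) - exp (-x))"
proof -
  have "(SSLUD_density mu has_integral (FA mu 0 - FA mu (-mu) + (FB mu mu - FB mu 0))) {-mu..mu}"
    by (rule has_integral_combine[OF _ _ int1[OF assms(1)] int2[OF assms(1)]]) (use assms in auto)
  note h = this
  have "(SSLUD_density mu has_integral (FA mu 0 - FA mu (-mu) + (FB mu mu - FB mu 0) + (exp (-mu) - exp (-x)))) {-mu..x}"
    by (rule has_integral_combine[OF _ _ h int3[OF assms]]) (use assms in auto)
  then show ?thesis using assms by (simp add: cdf_integral integral_unique)
qed



lemma expm_half: assumes "exp (- (x::real)) = 1/2" shows "x = ln 2"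
proof -
  have "exp x = 2" using assms by (simp add: exp_minus field_simps)
  then show ?thesis by (metis ln_exp)
qed

lemma FA_deriv: "mu > 0 \<Longrightarrow> (FA mu has_real_derivative exp t * (t / (2*mu) + 1/2)) (at t)"
  unfolding FA_def[abs_def] by (auto intro!: derivative_eq_intros simp: field_simps)

lemma FB_deriv: "mu > 0 \<Longrightarrow> (FB mu has_real_derivative exp (-t) * (t / (2*mu) + 1/2)) (at t)"
  unfolding FB_def[abs_def] by (auto intro!: derivative_eq_intros simp: field_simps)

theorem mainTheorem5:
  fixes mu M :: real
  assumes "mu > 0"
    and "SSLUD_cdf mu M = 1 / 2"
  shows "SSLUD_cdf mu 0 = 1 / 2 + (exp (- mu) - 1) / (2 * mu)
       \<and> SSLUD_cdf mu mu = 1 - exp (- mu)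
       \<and> (SSLUD_cdf mu 0 > 1 / 2 \<longrightarrow> exp M * (M - 1 + mu) + exp (- mu) - mu = 0)
       \<and> (SSLUD_cdf mu 0 \<le> 1 / 2 \<and> 1 / 2 < SSLUD_cdf mu mu \<longrightarrow>
            exp (- M) * (- M - 1 - mu) + exp (- mu) + mu = 0)
       \<and> (SSLUD_cdf mu mu \<le> 1 / 2 \<longrightarrow> M = ln 2)"
proof -
  have mu: "mu > 0" by (fact assms(1))
  have FAm: "FA mu (-mu) = - exp (-mu) / (2*mu)" using mu by (simp add: FA_def field_simps)
  have G0: "SSLUD_cdf mu 0 = 1 / 2 + (exp (- mu) - 1) / (2 * mu)"
  proof -
    have "SSLUD_cdf mu 0 = FA mu 0 - FA mu (-mu)" using cdf_A[OF mu, of 0] mu by simp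
    also have "\<dots> = 1 / 2 + (exp (- mu) - 1) / (2 * mu)"
      unfolding FAm using mu by (simp add: FA_def field_simps)
    finally show ?thesis .
  qed
  have Gmu: "SSLUD_cdf mu mu = 1 - exp (- mu)"
  proof -
    have "SSLUD_cdf mu mu = FA mu 0 - FA mu (-mu) + (FB mu mu - FB mu 0)" using cdf_B[OF mu, of mu] mu by simp
    also have "\<dots> = 1 - exp (- mu)"
      unfolding FAm using mu by (simp add: FA_def FB_def field_simps)
    finally show ?thesis .
  qed
  have "exp (-mu) < 1" using mu by simp
  then have G0lt: "SSLUD_cdf mu 0 < 1/2" using G0 mu by (simp add: divide_less_0_iff)
  have ii: "SSLUD_cdf mu 0 \<le> 1 / 2 \<and> 1 / 2 < SSLUD_cdf mu mu \<longrightarrow>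
            exp (- M) * (- M - 1 - mu) + exp (- mu) + mu = 0"
   and iii: "SSLUD_cdf mu mu \<le> 1 / 2 \<longrightarrow> M = ln 2"
  proof -
    consider "M < -mu" | "-mu \<le> M" "M \<le> 0" | "0 \<le> M" "M \<le> mu" | "mu \<le> M" by linarith
    then have "(1 / 2 < SSLUD_cdf mu mu \<longrightarrow> exp (- M) * (- M - 1 - mu) + exp (- mu) + mu = 0)
        \<and> (SSLUD_cdf mu mu \<le> 1 / 2 \<longrightarrow> M = ln 2)"
    proof cases
      case 1
      then show ?thesis using cdf_low[OF mu 1] assms(2) by simp
    next
      case 2
      have "FA mu M \<le> FA mu 0"
      proof (rule DERIV_nonneg_imp_nondecreasing[OF 2(2)])
        fix x assume "M \<le> x" "x \<le> 0"
        show "\<exists>y. (FA mu has_real_derivative y) (at x) \<and> 0 \<le> y"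
        proof (intro exI conjI)
        show "(FA mu has_real_derivative exp x * (x / (2*mu) + 1/2)) (at x)" by (rule FA_deriv[OF mu])
        have "x / (2*mu) + 1/2 = (x + mu) / (2*mu)" using mu by (simp add: field_simps)
        also have "\<dots> \<ge> 0" using \<open>M \<le> x\<close> 2 mu by simp
        finally show "0 \<le> exp x * (x / (2*mu) + 1/2)" by simp
      qed
      qed
      then have "SSLUD_cdf mu M \<le> SSLUD_cdf mu 0"
        using cdf_A[OF mu 2] cdf_A[OF mu, of 0] mu by simp
      then show ?thesis using G0lt assms(2) by simp
    next
      case 3
      have eq: "SSLUD_cdf mu M = 1 + exp (-mu) / (2*mu) - exp (-M) * ((M+1)/(2*mu) + 1/2)"
      proof -
        have "SSLUD_cdf mu M = FA mu 0 - FA mu (-mu) + (FB mu M - FB mu 0)" using cdf_B[OF mu 3] by simp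
        also have "\<dots> = 1 + exp (-mu) / (2*mu) - exp (-M) * ((M+1)/(2*mu) + 1/2)"
          unfolding FAm using mu by (simp add: FA_def FB_def field_simps)
        finally show ?thesis .
      qed
      have A: "exp (- M) * (- M - 1 - mu) + exp (- mu) + mu = 0"
      proof -
        have h: "1 + exp (-mu) / (2*mu) - exp (-M) * ((M+1)/(2*mu) + 1/2) = 1/2"
          using assms(2) eq by simp
        have "2*mu*(1 + exp (-mu) / (2*mu) - exp (-M) * ((M+1)/(2*mu) + 1/2))
              = 2*mu + exp (-mu) - exp (-M) * (M+1+mu)" using mu by (simp add: field_simps)
        then have "2*mu + exp (-mu) - exp (-M) * (M+1+mu) = mu" using h by simp
        then show ?thesis by (simp add: algebra_simps)
      qed
      have B: "M = ln 2" if "SSLUD_cdf mu mu \<le> 1/2"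
      proof (cases "M = mu")
        case True
        then show ?thesis using assms(2) Gmu expm_half[of mu] by simp
      next
        case False
        then have "M < mu" using 3 by simp
        have "FB mu M < FB mu mu"
        proof (rule DERIV_pos_imp_increasing[OF \<open>M < mu\<close>])
          fix x assume "M \<le> x" "x \<le> mu"
          show "\<exists>y. (FB mu has_real_derivative y) (at x) \<and> 0 < y"
          proof (intro exI conjI)
          show "(FB mu has_real_derivative exp (-x) * (x / (2*mu) + 1/2)) (at x)" by (rule FB_deriv[OF mu])
          have "x / (2*mu) \<ge> 0" using \<open>M \<le> x\<close> 3 mu by simp
          then show "0 < exp (-x) * (x / (2*mu) + 1/2)" by simp
        qed
        qed
        then have "SSLUD_cdf mu M < SSLUD_cdf mu mu"
          using cdf_B[OF mu 3] cdf_B[OF mu, of mu] mu by simp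
        then show ?thesis using that assms(2) by simp
      qed
      show ?thesis using A B by blast
    next
      case 4
      have eq: "SSLUD_cdf mu M = 1 - exp (-M)"
      proof -
        have "SSLUD_cdf mu M = FA mu 0 - FA mu (-mu) + (FB mu mu - FB mu 0) + (exp (-mu) - exp (-M))" using cdf_C[OF mu 4] by simp
        also have "\<dots> = 1 - exp (-M)"
          unfolding FAm using mu by (simp add: FA_def FB_def field_simps)
        finally show ?thesis .
      qed
      have "exp (-M) = 1/2" using eq assms(2) by simp
      then have "M = ln 2" by (rule expm_half)
      moreover have "exp (-M) \<le> exp (-mu)" using 4 by simp
      moreover have "\<not> 1/2 < SSLUD_cdf mu mu" using Gmu \<open>exp (-M) = 1/2\<close> \<open>exp (-M) \<le> exp (-mu)\<close> by linarith
      ultimately show ?thesis by blast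
    qed
    then show "SSLUD_cdf mu 0 \<le> 1 / 2 \<and> 1 / 2 < SSLUD_cdf mu mu \<longrightarrow>
            exp (- M) * (- M - 1 - mu) + exp (- mu) + mu = 0"
      and "SSLUD_cdf mu mu \<le> 1 / 2 \<longrightarrow> M = ln 2" by auto
  qed
  have i: "SSLUD_cdf mu 0 > 1 / 2 \<longrightarrow> exp M * (M - 1 + mu) + exp (- mu) - mu = 0"
    using G0lt by linarith
  show ?thesis using G0 Gmu i ii iii by blast
qed

end
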